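(* Let $a<b$ be real numbers, let the outcome set be $\Omega=[a,b]$ and the forecast set $\Gamma$ be the set of all probability distribution functions on $[a,b]$, and let the loss be the continuous ranked probability score $$\mathrm{CRPS}(F,y)=\int_a^b (F(u)-H(u-y))^2\,du,$$ where $H(x)=0$ for $x<0$ and $H(x)=1$ for $x\ge0$. Then $\mathrm{CRPS}$ is $\frac{2}{b-a}$-mixable. Moreover, for any $N\ge1$, any probability distribution functions $F_1,\dots,F_N\in\Gamma$ and any probability vector $\mathbf{q}=(q_1,\dots,q_N)$ ($q_i\ge0$, $\sum_i q_i=1$), the function $$F(u)=\frac{1}{2}-\frac{1}{4}\ln\frac{\sum_{i=1}^N q_i e^{-2(F_i(u))^2}}{\sum_{i=1}^N q_i e^{-2(1-F_i(u))^2}},\qquad u\in[a,b],$$ is a probability distribution function and satisfies, for all $y\in[a,b]$, $$e^{-\frac{2}{b-a}\mathrm{CRPS}(F,y)}\ge\sum_{i=1}^N q_i\, e^{-\frac{2}{b-a}\mathrm{CRPS}(F_i,y)}.$$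
   Context: A probability distribution function on $[a,b]$ is a non-decreasing function $F:[a,b]\to[0,1]$ with $F(a)=0$, $F(b)=1$, left-continuous and having a right limit at each point. A loss function $\lambda:\Gamma\times\Omega\to\mathbb{R}$ is $\eta$-mixable ($\eta>0$) if for every $N$, every probability vector $\mathbf{q}=(q_1,\dots,q_N)$ and every $c_1,\dots,c_N\in\Gamma$ there exists $f\in\Gamma$ with $\lambda(f,y)\le-\frac{1}{\eta}\ln\sum_{i=1}^N q_i e^{-\eta\lambda(c_i,y)}$ for all $y\in\Omega$. *)

theory Defs
  imports "HOL-Analysis.Analysis"
begin

text \<open>Probability distribution function on [a,b]: non-decreasing, values in [0,1],
  F a = 0, F b = 1, left-continuous at every point of (a,b] (left continuity at a is
  vacuous relative to [a,b]) and having a right limit at every point of [a,b).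
  Only the values on [a,b] matter.\<close>
definition pdf_on :: "real \<Rightarrow> real \<Rightarrow> (real \<Rightarrow> real) \<Rightarrow> bool" where
  "pdf_on a b F \<longleftrightarrow>
     mono_on {a..b} F \<and> (\<forall>u\<in>{a..b}. 0 \<le> F u \<and> F u \<le> 1) \<and>
     F a = 0 \<and> F b = 1 \<and>
     (\<forall>x\<in>{a<..b}. (F \<longlongrightarrow> F x) (at_left x)) \<and>
     (\<forall>x\<in>{a..<b}. \<exists>L. (F \<longlongrightarrow> L) (at_right x))"

definition heaviside :: "real \<Rightarrow> real" where
  "heaviside x = (if x < 0 then 0 else 1)"

definition crps :: "real \<Rightarrow> real \<Rightarrow> (real \<Rightarrow> real) \<Rightarrow> real \<Rightarrow> real" where
  "crps a b F y = integral {a..b} (\<lambda>u. (F u - heaviside (u - y))\<^sup>2)"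

definition mixable :: "real \<Rightarrow> 'g set \<Rightarrow> 'o set \<Rightarrow> ('g \<Rightarrow> 'o \<Rightarrow> real) \<Rightarrow> bool" where
  "mixable eta Gam Om loss \<longleftrightarrow> eta > 0 \<and>
     (\<forall>(N::nat) (q::nat \<Rightarrow> real) (c::nat \<Rightarrow> 'g).
        (\<forall>i<N. 0 \<le> q i) \<and> (\<Sum>i<N. q i) = 1 \<and> (\<forall>i<N. c i \<in> Gam) \<longrightarrow>
        (\<exists>f\<in>Gam. \<forall>y\<in>Om.
           loss f y \<le> - (1 / eta) * ln (\<Sum>i<N. q i * exp (- eta * loss (c i) y))))"

end

theory Submission
  imports Defs "HOL-Probability.Hoeffding"
begin

lemma hoeff_pos:
  fixes x l :: real
  assumes "0 \<le> x" "x \<le> 1" "l \<ge> 0"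
  shows "(1-x)*exp(-l*x) + x*exp(l*(1-x)) \<le> exp(l^2/8)"
proof -
  have pos: "1 + x*(exp l - 1) > 0"
    using assms by (smt (verit) exp_ge_zero mult_left_le_one_le mult_nonneg_nonneg one_le_exp_iff)
  have "-l*x + ln (1 + x*(exp l - 1)) \<le> l^2/8"
    using Hoeffdings_lemma_aux[of l x] assms by simp
  hence "exp (-l*x + ln (1 + x*(exp l - 1))) \<le> exp (l^2/8)" by simp
  moreover have "exp (-l*x + ln (1 + x*(exp l - 1))) = (1-x)*exp(-l*x) + x*exp(l*(1-x))"
  proof -
    have "exp(l*(1-x)) = exp(-l*x)*exp l" by (simp add: exp_add[symmetric] algebra_simps)
    moreover have "exp (-l*x + ln (1 + x*(exp l - 1))) = exp(-l*x) * (1 + x*(exp l - 1))"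
      unfolding exp_add using pos by simp
    ultimately show ?thesis by (simp only:) (simp add: algebra_simps)
  qed
  ultimately show ?thesis by (simp only:)
qed

lemma hoeff:
  fixes x l :: real
  assumes "0 \<le> x" "x \<le> 1"
  shows "(1-x)*exp(-l*x) + x*exp(l*(1-x)) \<le> exp(l^2/8)"
proof (cases "l \<ge> 0")
  case True then show ?thesis using hoeff_pos assms by blast
next
  case False
  have "(1-(1-x))*exp(-(-l)*(1-x)) + (1-x)*exp((-l)*(1-(1-x))) \<le> exp((-l)^2/8)"
    using hoeff_pos[of "1-x" "-l"] assms False by simp
  then show ?thesis by (simp add: algebra_simps)
qed

lemma tangent:
  fixes x z :: real
  assumes "0 \<le> x" "x \<le> 1"
  shows "(1-x)*exp(2*x^2 - 2*z^2) + x*exp(2*(1-x)^2 - 2*(1-z)^2) \<le> 1"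
proof -
  define d where "d = z - x"
  have h: "(1-x)*exp(-(4*d)*x) + x*exp((4*d)*(1-x)) \<le> exp((4*d)^2/8)"
    using hoeff assms by blast
  have e1: "2*x^2 - 2*z^2 = -(4*d)*x + (-2*d^2)" unfolding d_def by (simp add: power2_eq_square algebra_simps)
  have e2: "2*(1-x)^2 - 2*(1-z)^2 = (4*d)*(1-x) + (-2*d^2)" unfolding d_def by (simp add: power2_eq_square algebra_simps)
  have "(1-x)*exp(2*x^2 - 2*z^2) + x*exp(2*(1-x)^2 - 2*(1-z)^2)
      = ((1-x)*exp(-(4*d)*x) + x*exp((4*d)*(1-x))) * exp(-2*d^2)"
    unfolding e1 e2 exp_add by (simp add: algebra_simps)
  also have "\<dots> \<le> exp((4*d)^2/8) * exp(-2*d^2)"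
    using h by (simp add: mult_right_mono)
  also have "\<dots> = 1" by (simp add: power2_eq_square mult_exp_exp)
  finally show ?thesis .
qed

lemma brier_mix:
  fixes q z :: "nat \<Rightarrow> real"
  assumes q: "\<forall>i<N. 0 \<le> q i" and q1: "(\<Sum>i<N. q i) = 1"
    and A_def: "A = (\<Sum>i<N. q i * exp (-2 * (z i)\<^sup>2))"
    and B_def: "B = (\<Sum>i<N. q i * exp (-2 * (1 - z i)\<^sup>2))"
    and Apos: "A > 0" and Bpos: "B > 0"
    and x: "x = 1/2 - 1/4 * ln (A/B)" and x0: "0 \<le> x" and x1: "x \<le> 1"
  shows "A \<le> exp(-2*x\<^sup>2) \<and> B \<le> exp(-2*(1-x)\<^sup>2)"
proof -
  define n1 where "n1 = (1-x)*exp(2*x\<^sup>2)"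
  define n2 where "n2 = x*exp(2*(1-x)\<^sup>2)"
  have each: "n1 * exp (-2 * (z i)\<^sup>2) + n2 * exp (-2 * (1 - z i)\<^sup>2) \<le> 1" for i
  proof -
    have "n1 * exp (-2 * (z i)\<^sup>2) = (1-x)*exp(2*x\<^sup>2 - 2*(z i)\<^sup>2)"
      unfolding n1_def by (simp add: exp_diff exp_minus field_simps)
    moreover have "n2 * exp (-2 * (1 - z i)\<^sup>2) = x*exp(2*(1-x)\<^sup>2 - 2*(1-z i)\<^sup>2)"
      unfolding n2_def by (simp add: exp_diff exp_minus field_simps)
    ultimately show ?thesis using tangent[OF x0 x1, of "z i"] by simp
  qed
  have "n1 * A + n2 * B = (\<Sum>i<N. q i * (n1 * exp (-2 * (z i)\<^sup>2) + n2 * exp (-2 * (1 - z i)\<^sup>2)))"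
    unfolding A_def B_def by (simp add: sum_distrib_left sum.distrib algebra_simps)
  also have "\<dots> \<le> (\<Sum>i<N. q i * 1)"
    by (intro sum_mono mult_left_mono) (use q each in auto)
  finally have le1: "n1 * A + n2 * B \<le> 1" using q1 by simp
  have "ln (A/B) = 2 - 4*x" using x by simp
  hence "A/B = exp(2 - 4*x)" using Apos Bpos by (metis divide_pos_pos exp_ln)
  hence AB: "A = B * exp(2 - 4*x)" using Bpos by (simp add: field_simps)
  have "n1 * A = (1-x) * B * exp(2*(1-x)\<^sup>2)"
  proof -
    have "n1 * A = (1-x) * B * exp(2*x\<^sup>2 + (2 - 4*x))" unfolding AB n1_def exp_add by simp
    also have "2*x\<^sup>2 + (2 - 4*x) = 2*(1-x)\<^sup>2" by (simp add: power2_eq_square algebra_simps)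
    finally show ?thesis .
  qed
  hence "n1 * A + n2 * B = B * exp(2*(1-x)\<^sup>2)" unfolding n2_def by (simp add: algebra_simps)
  with le1 have "B * exp(2*(1-x)\<^sup>2) \<le> 1" by simp
  hence Ble: "B \<le> exp(-2*(1-x)\<^sup>2)"
    by (simp add: exp_minus field_simps)
  have "A \<le> exp(-2*(1-x)\<^sup>2) * exp(2 - 4*x)" unfolding AB using Ble by (simp add: mult_right_mono)
  also have "\<dots> = exp(-2*x\<^sup>2)" unfolding exp_add[symmetric] by (simp add: power2_eq_square algebra_simps)
  finally show ?thesis using Ble by simp
qed

lemma sum_q_exp_pos:
  fixes q w :: "nat \<Rightarrow> real"
  assumes q: "\<forall>i<N. 0 \<le> q i" and q1: "(\<Sum>i<N. q i) = 1"
  shows "(\<Sum>i<N. q i * exp (w i)) > 0"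
proof -
  obtain j where j: "j < N" "q j > 0"
  proof (rule ccontr)
    assume "\<not> thesis"
    with that have "\<forall>i<N. q i = 0" using q by force
    hence "(\<Sum>i<N. q i) = 0" by simp
    with q1 show False by simp
  qed
  show ?thesis
    by (rule sum_pos2[of _ j]) (use j q in auto)
qed

lemma jensen_exp:
  fixes q c w :: "nat \<Rightarrow> real"
  assumes q: "\<forall>i<N. 0 \<le> q i" and S: "S = (\<Sum>i<N. q i * exp (c i))" and Spos: "S > 0"
  shows "S * exp (\<Sum>i<N. (q i * exp (c i) / S) * (w i - c i)) \<le> (\<Sum>i<N. q i * exp (w i))"
proof -
  define m where "m = (\<Sum>i<N. (q i * exp (c i) / S) * (w i - c i))"
  have msum: "(\<Sum>i<N. q i * exp (c i) * (w i - c i)) = S * m"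
  proof -
    have "S * m = (\<Sum>i<N. S * ((q i * exp (c i) / S) * (w i - c i)))"
      by (simp add: m_def sum_distrib_left)
    also have "\<dots> = (\<Sum>i<N. q i * exp (c i) * (w i - c i))"
      using Spos by (intro sum.cong) auto
    finally show ?thesis by simp
  qed
  have each: "q i * exp (c i) * exp m * (1 + (w i - c i - m)) \<le> q i * exp (w i)" if "i < N" for i
  proof -
    have "exp m * (1 + (w i - c i - m)) \<le> exp m * exp (w i - c i - m)"
      by (intro mult_left_mono exp_ge_add_one_self) auto
    also have "\<dots> = exp (w i - c i)" by (simp add: exp_diff)
    finally have "q i * exp (c i) * (exp m * (1 + (w i - c i - m))) \<le> q i * exp (c i) * exp (w i - c i)"
      using q that by (intro mult_left_mono) auto
    also have "\<dots> = q i * exp (w i)" by (simp add: exp_diff)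
    finally show ?thesis by (simp add: algebra_simps)
  qed
  have "S * exp m = exp m * (S + S * m - m * S)" by (simp add: algebra_simps)
  also have "\<dots> = exp m * ((\<Sum>i<N. q i * exp (c i)) + (\<Sum>i<N. q i * exp (c i) * (w i - c i)) - m * (\<Sum>i<N. q i * exp (c i)))"
    using msum S by simp
  also have "\<dots> = (\<Sum>i<N. q i * exp (c i) * exp m * (1 + (w i - c i - m)))"
    by (simp add: sum_distrib_left sum_distrib_right sum.distrib sum_subtractf algebra_simps)
  also have "\<dots> \<le> (\<Sum>i<N. q i * exp (w i))"
    by (rule sum_mono) (use each in auto)
  finally show ?thesis unfolding m_def .
qed

lemma crps_has_integral:
  fixes G :: "real \<Rightarrow> real"
  assumes mono: "mono_on {a..b} G" and G01: "\<forall>u\<in>{a..b}. 0 \<le> G u \<and> G u \<le> 1"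
  shows "((\<lambda>u. (G u - heaviside (u - y))\<^sup>2) has_integral crps a b G y) {a..b}"
proof -
  define h where "h = (\<lambda>u::real. heaviside (u - y))"
  have hmono: "mono_on {a..b} h"
    by (rule mono_onI) (auto simp: h_def heaviside_def)
  have h01: "0 \<le> h u" "h u \<le> 1" for u by (auto simp: h_def heaviside_def)
  have m1: "mono_on {a..b} (\<lambda>u. (G u)\<^sup>2)"
  proof (rule mono_onI)
    fix r s assume "r \<in> {a..b}" "s \<in> {a..b}" "r \<le> s"
    then show "(G r)\<^sup>2 \<le> (G s)\<^sup>2"
      using mono_onD[OF mono] G01 by (intro power_mono) auto
  qed
  have m2: "mono_on {a..b} (\<lambda>u. G u * h u)"
  proof (rule mono_onI)
    fix r s assume "r \<in> {a..b}" "s \<in> {a..b}" "r \<le> s"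
    then show "G r * h r \<le> G s * h s"
      using mono_onD[OF mono] mono_onD[OF hmono] G01 h01 by (intro mult_mono) auto
  qed
  have eq: "(\<lambda>u. (G u - heaviside (u - y))\<^sup>2) = (\<lambda>u. ((G u)\<^sup>2 - 2 * (G u * h u)) + h u)"
    by (rule ext) (auto simp: h_def heaviside_def power2_eq_square algebra_simps)
  have "(\<lambda>u. ((G u)\<^sup>2 - 2 * (G u * h u)) + h u) integrable_on {a..b}"
    using integrable_on_mono_on[OF m1] integrable_on_mono_on[OF m2] integrable_on_mono_on[OF hmono]
    by (intro integrable_add integrable_diff) auto
  then show ?thesis unfolding eq crps_def by (simp add: integrable_integral)
qed

definition mixG :: "nat \<Rightarrow> (nat \<Rightarrow> real) \<Rightarrow> (nat \<Rightarrow> real) \<Rightarrow> real" where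
  "mixG N q z = 1/2 - 1/4 * ln ((\<Sum>i<N. q i * exp (-2 * (z i)\<^sup>2)) /
                                  (\<Sum>i<N. q i * exp (-2 * (1 - z i)\<^sup>2)))"

lemma mixG_mono:
  assumes q: "\<forall>i<N. 0 \<le> q i" and q1: "(\<Sum>i<N. q i) = 1"
    and z: "\<forall>i<N. 0 \<le> z i \<and> z i \<le> z' i \<and> z' i \<le> 1"
  shows "mixG N q z \<le> mixG N q z'"
proof -
  define A where "A z = (\<Sum>i<N. q i * exp (-2 * (z i)\<^sup>2))" for z :: "nat \<Rightarrow> real"
  define B where "B z = (\<Sum>i<N. q i * exp (-2 * (1 - z i)\<^sup>2))" for z :: "nat \<Rightarrow> real"
  have Ap: "A v > 0" for v unfolding A_def by (rule sum_q_exp_pos[OF q q1])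
  have Bp: "B v > 0" for v unfolding B_def by (rule sum_q_exp_pos[OF q q1])
  have "A z' \<le> A z" unfolding A_def
    by (intro sum_mono mult_left_mono) (use q z in \<open>auto intro!: power_mono\<close>)
  moreover have "B z \<le> B z'" unfolding B_def
    by (intro sum_mono mult_left_mono) (use q z in \<open>auto intro!: power_mono\<close>)
  ultimately have "A z' / B z' \<le> A z / B z"
    using Ap Bp by (intro frac_le) (auto intro: less_imp_le)
  hence "ln (A z' / B z') \<le> ln (A z / B z)"
    using Ap Bp by simp
  then show ?thesis unfolding mixG_def A_def B_def by simp
qed

lemma mixG_0:
  assumes q1: "(\<Sum>i<N. q i) = 1" and z: "\<forall>i<N. z i = 0"
  shows "mixG N q z = 0"
proof -
  have "(\<Sum>i<N. q i * exp (-2 * (z i)\<^sup>2)) = (\<Sum>i<N. q i)" using z by (intro sum.cong) auto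
  moreover have "(\<Sum>i<N. q i * exp (-2 * (1 - z i)\<^sup>2)) = (\<Sum>i<N. q i) * exp (-2)"
    using z by (simp add: sum_distrib_right)
  ultimately show ?thesis unfolding mixG_def using q1 by (simp add: ln_div)
qed

lemma mixG_1:
  assumes q1: "(\<Sum>i<N. q i) = 1" and z: "\<forall>i<N. z i = 1"
  shows "mixG N q z = 1"
proof -
  have "(\<Sum>i<N. q i * exp (-2 * (1 - z i)\<^sup>2)) = (\<Sum>i<N. q i)" using z by (intro sum.cong) auto
  moreover have "(\<Sum>i<N. q i * exp (-2 * (z i)\<^sup>2)) = (\<Sum>i<N. q i) * exp (-2)"
    using z by (simp add: sum_distrib_right)
  ultimately show ?thesis unfolding mixG_def using q1 by (simp add: ln_div)
qed

lemma mixG_01: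
  assumes q: "\<forall>i<N. 0 \<le> q i" and q1: "(\<Sum>i<N. q i) = 1"
    and z: "\<forall>i<N. 0 \<le> z i \<and> z i \<le> 1"
  shows "0 \<le> mixG N q z \<and> mixG N q z \<le> 1"
proof
  have "mixG N q (\<lambda>_. 0) \<le> mixG N q z" by (rule mixG_mono[OF q q1]) (use z in auto)
  then show "0 \<le> mixG N q z" using mixG_0[OF q1, of "\<lambda>_. 0"] by simp
  have "mixG N q z \<le> mixG N q (\<lambda>_. 1)" by (rule mixG_mono[OF q q1]) (use z in auto)
  then show "mixG N q z \<le> 1" using mixG_1[OF q1, of "\<lambda>_. 1"] by simp
qed

lemma mixG_tendsto:
  fixes Fs :: "nat \<Rightarrow> real \<Rightarrow> real"
  assumes q: "\<forall>i<N. 0 \<le> q i" and q1: "(\<Sum>i<N. q i) = 1"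
    and lim: "\<forall>i<N. (Fs i \<longlongrightarrow> L i) F"
  shows "((\<lambda>u. mixG N q (\<lambda>i. Fs i u)) \<longlongrightarrow> mixG N q L) F"
proof -
  have Ap: "(\<Sum>i<N. q i * exp (-2 * (L i)\<^sup>2)) > 0" by (rule sum_q_exp_pos[OF q q1])
  have Bp: "(\<Sum>i<N. q i * exp (-2 * (1 - L i)\<^sup>2)) > 0" by (rule sum_q_exp_pos[OF q q1])
  show ?thesis unfolding mixG_def
    using Ap Bp lim by (intro tendsto_intros) auto
qed

lemma pdf_mix:
  fixes Fs :: "nat \<Rightarrow> real \<Rightarrow> real"
  assumes q: "\<forall>i<N. 0 \<le> q i" and q1: "(\<Sum>i<N. q i) = 1"
    and pdf: "\<forall>i<N. pdf_on a b (Fs i)"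
  shows "pdf_on a b (\<lambda>u. mixG N q (\<lambda>i. Fs i u))"
proof -
  have mono: "\<forall>i<N. mono_on {a..b} (Fs i)" and F01: "\<forall>i<N. \<forall>u\<in>{a..b}. 0 \<le> Fs i u \<and> Fs i u \<le> 1"
    and Fa: "\<forall>i<N. Fs i a = 0" and Fb: "\<forall>i<N. Fs i b = 1"
    and lc: "\<forall>i<N. \<forall>x\<in>{a<..b}. (Fs i \<longlongrightarrow> Fs i x) (at_left x)"
    and rl: "\<forall>i<N. \<forall>x\<in>{a..<b}. \<exists>L. (Fs i \<longlongrightarrow> L) (at_right x)"
    using pdf unfolding pdf_on_def by auto
  show ?thesis unfolding pdf_on_def
  proof (intro conjI ballI)
    show "mono_on {a..b} (\<lambda>u. mixG N q (\<lambda>i. Fs i u))"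
    proof (rule mono_onI)
      fix r s assume rs: "r \<in> {a..b}" "s \<in> {a..b}" "r \<le> s"
      show "mixG N q (\<lambda>i. Fs i r) \<le> mixG N q (\<lambda>i. Fs i s)"
      proof (rule mixG_mono[OF q q1])
        have "Fs i r \<le> Fs i s" if "i<N" for i using mono that rs by (meson mono_onD)
        then show "\<forall>i<N. 0 \<le> Fs i r \<and> Fs i r \<le> Fs i s \<and> Fs i s \<le> 1" using F01 rs by auto
      qed
    qed
  next
    fix u assume "u \<in> {a..b}"
    then show "0 \<le> mixG N q (\<lambda>i. Fs i u)" "mixG N q (\<lambda>i. Fs i u) \<le> 1"
      using mixG_01[OF q q1, of "\<lambda>i. Fs i u"] F01 by auto
  next
    show "mixG N q (\<lambda>i. Fs i a) = 0" using mixG_0[OF q1] Fa by auto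
    show "mixG N q (\<lambda>i. Fs i b) = 1" using mixG_1[OF q1] Fb by auto
  next
    fix x assume "x \<in> {a<..b}"
    then show "((\<lambda>u. mixG N q (\<lambda>i. Fs i u)) \<longlongrightarrow> mixG N q (\<lambda>i. Fs i x)) (at_left x)"
      using lc by (intro mixG_tendsto[OF q q1]) auto
  next
    fix x assume x: "x \<in> {a..<b}"
    have "\<forall>i. \<exists>L. i < N \<longrightarrow> (Fs i \<longlongrightarrow> L) (at_right x)" using rl x by auto
    then obtain L where "\<forall>i. i < N \<longrightarrow> (Fs i \<longlongrightarrow> L i) (at_right x)" by metis
    then show "\<exists>L. ((\<lambda>u. mixG N q (\<lambda>i. Fs i u)) \<longlongrightarrow> L) (at_right x)"
      using mixG_tendsto[OF q q1] by blast
  qed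
qed

lemma mix_ineq:
  fixes Fs :: "nat \<Rightarrow> real \<Rightarrow> real"
  assumes ab: "a < b" and q: "\<forall>i<N. 0 \<le> q i" and q1: "(\<Sum>i<N. q i) = 1"
    and pdf: "\<forall>i<N. pdf_on a b (Fs i)" and y: "y \<in> {a..b}"
  shows "exp (- (2 / (b - a)) * crps a b (\<lambda>u. mixG N q (\<lambda>i. Fs i u)) y)
           \<ge> (\<Sum>i<N. q i * exp (- (2 / (b - a)) * crps a b (Fs i) y))"
proof -
  define F where "F = (\<lambda>u. mixG N q (\<lambda>i. Fs i u))"
  have pF: "pdf_on a b F" unfolding F_def by (rule pdf_mix[OF q q1 pdf])
  define l where "l G u = (G u - heaviside (u - y))\<^sup>2" for G :: "real \<Rightarrow> real" and u
  define C where "C i = crps a b (Fs i) y" for i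
  define CF where "CF = crps a b F y"
  have hI: "(l (Fs i) has_integral C i) {a..b}" if "i < N" for i
    unfolding l_def C_def using pdf that
    by (intro crps_has_integral) (auto simp: pdf_on_def)
  have hF: "(l F has_integral CF) {a..b}"
    unfolding l_def CF_def using pF
    by (intro crps_has_integral) (auto simp: pdf_on_def)
  have pt: "(\<Sum>i<N. q i * exp (-2 * l (Fs i) u)) \<le> exp (-2 * l F u)" if u: "u \<in> {a..b}" for u
  proof -
    define A where "A = (\<Sum>i<N. q i * exp (-2 * (Fs i u)\<^sup>2))"
    define B where "B = (\<Sum>i<N. q i * exp (-2 * (1 - Fs i u)\<^sup>2))"
    have Fu: "F u = 1/2 - 1/4 * ln (A/B)" unfolding F_def mixG_def A_def B_def ..
    have Fu01: "0 \<le> F u" "F u \<le> 1" using pF u by (auto simp: pdf_on_def)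
    have AB: "A \<le> exp(-2*(F u)\<^sup>2) \<and> B \<le> exp(-2*(1-F u)\<^sup>2)"
      by (rule brier_mix[OF q q1 A_def B_def _ _ Fu Fu01])
         (auto simp: A_def B_def intro!: sum_q_exp_pos[OF q q1])
    show ?thesis
    proof (cases "u < y")
      case True
      then show ?thesis using AB unfolding l_def A_def by (simp add: heaviside_def)
    next
      case False
      have "(\<Sum>i<N. q i * exp (-2 * l (Fs i) u)) = B"
        unfolding l_def B_def using False by (simp add: heaviside_def power2_commute)
      moreover have "exp (-2 * l F u) = exp(-2*(1-F u)\<^sup>2)"
        unfolding l_def using False by (simp add: heaviside_def power2_commute)
      ultimately show ?thesis using AB by simp
    qed
  qed
  define L where "L = b - a"
  have Lpos: "L > 0" using ab by (simp add: L_def)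
  define c where "c i = -(2/L) * C i" for i
  define S where "S = (\<Sum>i<N. q i * exp (c i))"
  have Spos: "S > 0" unfolding S_def by (rule sum_q_exp_pos[OF q q1])
  define p where "p i = q i * exp (c i) / S" for i
  have lin: "ln S + (\<Sum>i<N. p i * (-2 * l (Fs i) u - c i)) \<le> -2 * l F u" if u: "u \<in> {a..b}" for u
  proof -
    have "S * exp (\<Sum>i<N. p i * (-2 * l (Fs i) u - c i)) \<le> (\<Sum>i<N. q i * exp (-2 * l (Fs i) u))"
      unfolding p_def by (rule jensen_exp[OF q S_def Spos])
    also have "\<dots> \<le> exp (-2 * l F u)" by (rule pt[OF u])
    finally have "exp (ln S + (\<Sum>i<N. p i * (-2 * l (Fs i) u - c i))) \<le> exp (-2 * l F u)"
      using Spos by (simp add: exp_add)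
    then show ?thesis by simp
  qed
  have hc: "((\<lambda>u. k) has_integral (L * k)) {a..b}" for k
    using has_integral_const_real[of k a b] ab by (simp add: L_def)
  have int1: "((\<lambda>u. ln S + (\<Sum>i<N. p i * (-2 * l (Fs i) u - c i))) has_integral
      (L * ln S + (\<Sum>i<N. p i * (-2 * C i - L * c i)))) {a..b}"
  proof (intro has_integral_add hc has_integral_sum has_integral_mult_right has_integral_diff)
    fix i assume "i \<in> {..<N}"
    then show "(l (Fs i) has_integral C i) {a..b}" using hI by auto
  qed auto
  have int2: "((\<lambda>u. -2 * l F u) has_integral (-2 * CF)) {a..b}"
    by (intro has_integral_mult_right hF)
  have le: "L * ln S + (\<Sum>i<N. p i * (-2 * C i - L * c i)) \<le> -2 * CF"
    by (rule has_integral_le[OF int1 int2]) (use lin in auto)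
  have "(\<Sum>i<N. p i * (-2 * C i - L * c i)) = 0"
    unfolding c_def using Lpos by (intro sum.neutral) auto
  with le have "L * ln S \<le> -2 * CF" by simp
  hence "ln S \<le> - (2 / L) * CF" using Lpos by (simp add: field_simps)
  hence "exp (ln S) \<le> exp (- (2 / L) * CF)" by simp
  hence "S \<le> exp (- (2 / L) * CF)" using Spos by simp
  then show ?thesis unfolding S_def c_def C_def CF_def F_def L_def by simp
qed

theorem theorem2:
  fixes a b :: real
  assumes "a < b"
  shows "mixable (2 / (b - a)) {F. pdf_on a b F} {a..b} (crps a b)
    \<and> (\<forall>(N::nat) (q::nat \<Rightarrow> real) (Fs::nat \<Rightarrow> real \<Rightarrow> real).
         N \<ge> 1 \<and> (\<forall>i<N. 0 \<le> q i) \<and> (\<Sum>i<N. q i) = 1 \<and> (\<forall>i<N. pdf_on a b (Fs i)) \<longrightarrow>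
         (let F = (\<lambda>u. 1/2 - 1/4 * ln ((\<Sum>i<N. q i * exp (-2 * (Fs i u)\<^sup>2)) /
                                        (\<Sum>i<N. q i * exp (-2 * (1 - Fs i u)\<^sup>2))))
          in pdf_on a b F \<and>
             (\<forall>y\<in>{a..b}. exp (- (2 / (b - a)) * crps a b F y)
                 \<ge> (\<Sum>i<N. q i * exp (- (2 / (b - a)) * crps a b (Fs i) y)))))"
proof -
  have eqF: "(\<lambda>u. 1/2 - 1/4 * ln ((\<Sum>i<N. q i * exp (-2 * (Fs i u)\<^sup>2)) /
                                        (\<Sum>i<N. q i * exp (-2 * (1 - Fs i u)\<^sup>2))))
           = (\<lambda>u. mixG N q (\<lambda>i. Fs i u))" for N q and Fs :: "nat \<Rightarrow> real \<Rightarrow> real"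
    by (simp add: mixG_def)
  have eta: "2 / (b - a) > 0" using assms by simp
  show ?thesis
  proof (intro conjI allI impI)
    show "mixable (2 / (b - a)) {F. pdf_on a b F} {a..b} (crps a b)"
      unfolding mixable_def
    proof (intro conjI eta allI impI)
      fix N :: nat and q :: "nat \<Rightarrow> real" and c :: "nat \<Rightarrow> real \<Rightarrow> real"
      assume h: "(\<forall>i<N. 0 \<le> q i) \<and> (\<Sum>i<N. q i) = 1 \<and> (\<forall>i<N. c i \<in> {F. pdf_on a b F})"
      hence q: "\<forall>i<N. 0 \<le> q i" and q1: "(\<Sum>i<N. q i) = 1" and pdf: "\<forall>i<N. pdf_on a b (c i)" by auto
      show "\<exists>f\<in>{F. pdf_on a b F}. \<forall>y\<in>{a..b}. crps a b f y
              \<le> - (1 / (2 / (b - a))) * ln (\<Sum>i<N. q i * exp (- (2 / (b - a)) * crps a b (c i) y))"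
      proof (intro bexI ballI)
        show "(\<lambda>u. mixG N q (\<lambda>i. c i u)) \<in> {F. pdf_on a b F}" using pdf_mix[OF q q1 pdf] by simp
      next
        fix y assume y: "y \<in> {a..b}"
        define S where "S = (\<Sum>i<N. q i * exp (- (2 / (b - a)) * crps a b (c i) y))"
        have Spos: "S > 0" unfolding S_def by (rule sum_q_exp_pos[OF q q1])
        have "S \<le> exp (- (2 / (b - a)) * crps a b (\<lambda>u. mixG N q (\<lambda>i. c i u)) y)"
          unfolding S_def by (rule mix_ineq[OF assms q q1 pdf y])
        hence "ln S \<le> - (2 / (b - a)) * crps a b (\<lambda>u. mixG N q (\<lambda>i. c i u)) y"
          using Spos by (metis exp_le_cancel_iff exp_ln)
        then show "crps a b (\<lambda>u. mixG N q (\<lambda>i. c i u)) y \<le> - (1 / (2 / (b - a))) * ln S"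
          using assms by (simp add: field_simps)
      qed
    qed
  next
    fix N :: nat and q :: "nat \<Rightarrow> real" and Fs :: "nat \<Rightarrow> real \<Rightarrow> real"
    assume h: "1 \<le> N \<and> (\<forall>i<N. 0 \<le> q i) \<and> (\<Sum>i<N. q i) = 1 \<and> (\<forall>i<N. pdf_on a b (Fs i))"
    hence q: "\<forall>i<N. 0 \<le> q i" and q1: "(\<Sum>i<N. q i) = 1" and pdf: "\<forall>i<N. pdf_on a b (Fs i)" by auto
    show "let F = (\<lambda>u. 1/2 - 1/4 * ln ((\<Sum>i<N. q i * exp (-2 * (Fs i u)\<^sup>2)) /
                                        (\<Sum>i<N. q i * exp (-2 * (1 - Fs i u)\<^sup>2))))
          in pdf_on a b F \<and>
             (\<forall>y\<in>{a..b}. exp (- (2 / (b - a)) * crps a b F y)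
                 \<ge> (\<Sum>i<N. q i * exp (- (2 / (b - a)) * crps a b (Fs i) y)))"
      unfolding eqF Let_def
      using pdf_mix[OF q q1 pdf] mix_ineq[OF assms q q1 pdf] by blast
  qed
qed

end
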